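(* Let $(X,Y)$ be a jointly Gaussian random vector on a probability space $(\Omega,\mathcal F,\mathbb P)$ with standard normal marginals and correlation $c\in[-1,1]$. Then the following are equivalent: (i) $c\ge0$; (ii) $\{\mathbb P_A\times\mathbb P_B: A,B\in\sigma^+(X)\}\subseteq\mathcal P_{X,Y}$; (iii) $\{\mathbb P_A\times\mathbb P_A: A\in\sigma^+(X)\}\subseteq\mathcal P_{X,Y}$.
   Context: $\sigma^+(X)=\{A\in\sigma(X):\mathbb P(A)>0\}$, where $\sigma(X)$ is the $\sigma$-field generated by $X$; for such $A$, $\mathbb P_A=\mathbb P(\cdot\mid A)$ is the conditional probability given $A$. $\mathcal P_{X,Y}$ is the set of all product probability measures $\pi_1\times\pi_2$ on $(\Omega^2,\mathcal F\otimes\mathcal F)$ such that $\iint_{\Omega^2}(X(\omega)-X(\omega'))(Y(\omega)-Y(\omega'))\,\pi_1(\mathrm d\omega)\pi_2(\mathrm d\omega')\ge0$. *)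

theory Defs
  imports "HOL-Probability.Probability"
begin

definition gaussian_law :: "real \<Rightarrow> real \<Rightarrow> real measure" where
  "gaussian_law mu v =
     (if v = 0 then return borel mu else density lborel (normal_density mu (sqrt v)))"

definition gaussian_rv :: "'a measure \<Rightarrow> ('a \<Rightarrow> real) \<Rightarrow> bool" where
  "gaussian_rv M Z \<longleftrightarrow> Z \<in> borel_measurable M \<and>
     (\<exists>mu v. v \<ge> 0 \<and> distr M borel Z = gaussian_law mu v)"

definition jointly_gaussian :: "'a measure \<Rightarrow> ('a \<Rightarrow> real) \<Rightarrow> ('a \<Rightarrow> real) \<Rightarrow> bool" where
  "jointly_gaussian M X Y \<longleftrightarrow>
     X \<in> borel_measurable M \<and> Y \<in> borel_measurable M \<and>
     (\<forall>a b. gaussian_rv M (\<lambda>\<omega>. a * X \<omega> + b * Y \<omega>))"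

definition sigma_plus :: "'a measure \<Rightarrow> ('a \<Rightarrow> real) \<Rightarrow> 'a set set" where
  "sigma_plus M X = {A \<in> sets (vimage_algebra (space M) X borel). measure M A > 0}"

definition cond_measure :: "'a measure \<Rightarrow> 'a set \<Rightarrow> 'a measure" where
  "cond_measure M A = uniform_measure M A"

definition PXY :: "'a measure \<Rightarrow> ('a \<Rightarrow> real) \<Rightarrow> ('a \<Rightarrow> real) \<Rightarrow> ('a \<times> 'a) measure set" where
  "PXY M X Y = {pi1 \<Otimes>\<^sub>M pi2 | pi1 pi2.
      prob_space pi1 \<and> prob_space pi2 \<and> sets pi1 = sets M \<and> sets pi2 = sets M \<and>
      integrable (pi1 \<Otimes>\<^sub>M pi2) (\<lambda>(w, w'). (X w - X w') * (Y w - Y w')) \<and>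
      (\<integral>(w, w'). (X w - X w') * (Y w - Y w') \<partial>(pi1 \<Otimes>\<^sub>M pi2)) \<ge> 0}"

end

theory Submission
  imports Defs
begin


lemma gauss_law_mean:
  fixes U :: "'a \<Rightarrow> real"
  assumes U: "U \<in> borel_measurable M"
    and D: "distr M borel U = gaussian_law mu v" and v: "v \<ge> 0"
  shows "integrable M U \<and> integral\<^sup>L M U = mu"
proof -
  have I: "integrable M U \<longleftrightarrow> integrable (gaussian_law mu v) (\<lambda>x. x)"
    using integrable_distr_eq[OF U, of "\<lambda>x. x"] unfolding D by simp
  have E: "integral\<^sup>L M U = integral\<^sup>L (gaussian_law mu v) (\<lambda>x. x)"
    using integral_distr[OF U, of "\<lambda>x. x"] unfolding D by simp
  show ?thesis
  proof (cases "v = 0")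
    case True
    have G: "gaussian_law mu v = return borel mu" using True by (simp add: gaussian_law_def)
    have "(\<integral>\<^sup>+ x. ennreal (norm x) \<partial>return borel mu) = ennreal (norm mu)"
      by (rule nn_integral_return) auto
    then have "integrable (return borel mu) (\<lambda>x::real. x)"
      unfolding integrable_iff_bounded by simp
    moreover have "integral\<^sup>L (return borel mu) (\<lambda>x::real. x) = mu"
      by (rule integral_return) auto
    ultimately show ?thesis using I E unfolding G by simp
  next
    case False
    then have s: "sqrt v > 0" using v False by simp
    have "integrable (density lborel (normal_density mu (sqrt v))) (\<lambda>x. x)"
      using integrable_normal_moment_nz_1[OF s, of mu]
      by (subst integrable_real_density) (auto simp: mult.commute)
    moreover have "integral\<^sup>L (density lborel (normal_density mu (sqrt v))) (\<lambda>x. x) = mu"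
      using integral_normal_moment_nz_1[OF s, of mu]
      by (subst integral_real_density) (auto simp: mult.commute)
    ultimately show ?thesis using I E False by (simp add: gaussian_law_def)
  qed
qed

lemma gauss_law_zero:
  fixes U :: "'a \<Rightarrow> real"
  assumes U: "U \<in> borel_measurable M"
    and D: "distr M borel U = gaussian_law 0 v" and v: "v \<ge> 0"
  shows "integrable M (\<lambda>x. (U x)^2) \<and> integral\<^sup>L M (\<lambda>x. (U x)^2) = v
     \<and> integral\<^sup>L M (\<lambda>x. exp (\<i> * complex_of_real (U x))) = complex_of_real (exp (- v / 2))"
proof -
  have I: "integrable M (\<lambda>x. (U x)^2) \<longleftrightarrow> integrable (gaussian_law 0 v) (\<lambda>x. x^2)"
    using integrable_distr_eq[OF U, of "\<lambda>x. x^2"] unfolding D by simp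
  have E: "integral\<^sup>L M (\<lambda>x. (U x)^2) = integral\<^sup>L (gaussian_law 0 v) (\<lambda>x. x^2)"
    using integral_distr[OF U, of "\<lambda>x. x^2"] unfolding D by simp
  have C: "integral\<^sup>L M (\<lambda>x. exp (\<i> * complex_of_real (U x))) =
      integral\<^sup>L (gaussian_law 0 v) (\<lambda>x. exp (\<i> * complex_of_real x))"
    using integral_distr[OF U, of "\<lambda>x. exp (\<i> * complex_of_real x)"] unfolding D by simp
  show ?thesis
  proof (cases "v = 0")
    case True
    have "integrable (return borel (0::real)) (\<lambda>x. x^2)"
      unfolding integrable_iff_bounded
      by (subst nn_integral_return) auto
    then show ?thesis using I E C True
      by (simp add: gaussian_law_def integral_return)
  next
    case False
    define s where "s = sqrt v"
    then have s: "s > 0" using v False by simp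
    have sv: "s^2 = v" using v s_def by simp
    have "integrable (density lborel (normal_density 0 s)) (\<lambda>x. x^2)"
      using integrable_normal_moment[OF s, of 0 2]
      by (subst integrable_real_density) (auto simp: mult.commute)
    moreover have "integral\<^sup>L (density lborel (normal_density 0 s)) (\<lambda>x. x^2) = v"
      using integral_normal_moment_even[OF s, of 0 1] sv
      by (subst integral_real_density) (auto simp: mult.commute)
    moreover have "integral\<^sup>L (density lborel (normal_density 0 s)) (\<lambda>x. exp (\<i> * complex_of_real x))
        = complex_of_real (exp (- v / 2))"
    proof -
      have "integral\<^sup>L (density lborel (normal_density 0 s)) (\<lambda>x. exp (\<i> * complex_of_real x))
          = (\<integral>x. normal_density 0 s x *\<^sub>R exp (\<i> * complex_of_real x) \<partial>lborel)"
        by (subst integral_density) auto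
      also have "\<dots> = \<bar>s\<bar> *\<^sub>R (\<integral>x. normal_density 0 s (0 + s * x) *\<^sub>R exp (\<i> * complex_of_real (0 + s * x)) \<partial>lborel)"
        by (rule lborel_integral_real_affine) (use s in auto)
      also have "\<dots> = (\<integral>x. std_normal_density x *\<^sub>R exp (\<i> * complex_of_real (s * x)) \<partial>lborel)"
      proof -
        have "\<And>x. \<bar>s\<bar> *\<^sub>R (normal_density 0 s (0 + s * x) *\<^sub>R exp (\<i> * complex_of_real (0 + s * x)))
             = std_normal_density x *\<^sub>R exp (\<i> * complex_of_real (s * x))"
          using s by (simp add: normal_density_def power_mult_distrib real_sqrt_mult)
        then show ?thesis by (simp flip: integral_scaleR_right)
      qed
      also have "\<dots> = char std_normal_distribution s"
        unfolding char_def by (subst integral_density) auto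
      also have "\<dots> = complex_of_real (exp (- v / 2))"
        by (simp add: char_std_normal_distribution sv)
      finally show ?thesis .
    qed
    ultimately show ?thesis using I E C False by (simp add: gaussian_law_def s_def)
  qed
qed



lemma gauss_rv_char:
  fixes U :: "'a \<Rightarrow> real"
  assumes g: "gaussian_rv M U" and E0: "integral\<^sup>L M U = 0"
  shows "integrable M (\<lambda>x. (U x)^2) \<and>
     integral\<^sup>L M (\<lambda>x. exp (\<i> * complex_of_real (U x))) = complex_of_real (exp (- integral\<^sup>L M (\<lambda>x. (U x)^2) / 2))"
proof -
  from g obtain mu v where U: "U \<in> borel_measurable M" and v: "v \<ge> 0"
    and D: "distr M borel U = gaussian_law mu v" unfolding gaussian_rv_def by blast
  have "mu = 0" using gauss_law_mean[OF U D v] E0 by simp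
  then have D0: "distr M borel U = gaussian_law 0 v" using D by simp
  show ?thesis using gauss_law_zero[OF U D0 v] by simp
qed

lemma iexp_approx_2: "cmod (exp (\<i> * complex_of_real y) - 1 - \<i> * complex_of_real y) \<le> y^2 / 2"
proof -
  have "cmod (exp (\<i> * complex_of_real y) - (\<Sum>k\<le>1. (\<i> * complex_of_real y)^k / fact k)) \<le> \<bar>y\<bar>^(Suc 1) / fact (Suc 1)"
    by (rule iexp_approx1)
  moreover have "(\<Sum>k\<le>1. (\<i> * complex_of_real y)^k / fact k) = 1 + \<i> * complex_of_real y"
    by (simp add: numeral_2_eq_2)
  moreover have "\<bar>y\<bar>^(Suc 1) / fact (Suc 1) = y^2 / 2"
    by (simp add: numeral_2_eq_2[symmetric] power2_abs)
  ultimately show ?thesis by (simp add: diff_diff_eq)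
qed

lemma prod_int:
  fixes f g :: "'b \<Rightarrow> real"
  assumes PS: "pair_sigma_finite M1 M2" and f: "integrable M1 f" and g: "integrable M2 g"
  shows "integrable (M1 \<Otimes>\<^sub>M M2) (\<lambda>z. f (fst z) * g (snd z))"
    and "integral\<^sup>L (M1 \<Otimes>\<^sub>M M2) (\<lambda>z. f (fst z) * g (snd z)) = integral\<^sup>L M1 f * integral\<^sup>L M2 g"
proof -
  interpret pair_sigma_finite M1 M2 by (rule PS)
  have fm[measurable]: "f \<in> borel_measurable M1" using f by (rule borel_measurable_integrable)
  have gm[measurable]: "g \<in> borel_measurable M2" using g by (rule borel_measurable_integrable)
  show I: "integrable (M1 \<Otimes>\<^sub>M M2) (\<lambda>z. f (fst z) * g (snd z))"
  proof (rule Fubini_integrable)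
    show "(\<lambda>z. f (fst z) * g (snd z)) \<in> borel_measurable (M1 \<Otimes>\<^sub>M M2)" by measurable
    have "(\<lambda>x. \<integral>y. norm (f (fst (x, y)) * g (snd (x, y))) \<partial>M2) = (\<lambda>x. \<bar>f x\<bar> * (\<integral>y. \<bar>g y\<bar> \<partial>M2))"
      by (simp add: abs_mult)
    moreover have "integrable M1 (\<lambda>x. \<bar>f x\<bar> * (\<integral>y. \<bar>g y\<bar> \<partial>M2))"
      using f by (intro Bochner_Integration.integrable_mult_left integrable_abs)
    ultimately show "integrable M1 (\<lambda>x. \<integral>y. norm (f (fst (x, y)) * g (snd (x, y))) \<partial>M2)" by simp
    show "AE x in M1. integrable M2 (\<lambda>y. f (fst (x, y)) * g (snd (x, y)))"
      using g by (intro AE_I2) simp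
  qed
  have "integral\<^sup>L (M1 \<Otimes>\<^sub>M M2) (\<lambda>z. f (fst z) * g (snd z)) = (\<integral>x. (\<integral>y. f (fst (x, y)) * g (snd (x, y)) \<partial>M2) \<partial>M1)"
    by (rule integral_fst'[OF I, symmetric])
  also have "\<dots> = (\<integral>x. f x * integral\<^sup>L M2 g \<partial>M1)" by simp
  also have "\<dots> = integral\<^sup>L M1 f * integral\<^sup>L M2 g" by simp
  finally show "integral\<^sup>L (M1 \<Otimes>\<^sub>M M2) (\<lambda>z. f (fst z) * g (snd z)) = integral\<^sup>L M1 f * integral\<^sup>L M2 g" .
qed

definition Qf :: "'a measure \<Rightarrow> ('a \<Rightarrow> real) \<Rightarrow> 'a set \<Rightarrow> 'a set \<Rightarrow> real" where
  "Qf M X A B = integral\<^sup>L (uniform_measure M A) (\<lambda>x. (X x)^2)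
     - 2 * integral\<^sup>L (uniform_measure M A) X * integral\<^sup>L (uniform_measure M B) X
     + integral\<^sup>L (uniform_measure M B) (\<lambda>x. (X x)^2)"


context
  fixes M :: "'a measure" and X Y :: "'a \<Rightarrow> real" and c :: real
  assumes P: "prob_space M"
    and J: "jointly_gaussian M X Y"
    and DX: "distr M borel X = gaussian_law 0 1"
    and DY: "distr M borel Y = gaussian_law 0 1"
    and C: "integral\<^sup>L M (\<lambda>\<omega>. X \<omega> * Y \<omega>) = c"
begin

interpretation prob_space M by (rule P)

lemma Xm[measurable]: "X \<in> borel_measurable M" using J unfolding jointly_gaussian_def by blast
lemma Ym[measurable]: "Y \<in> borel_measurable M" using J unfolding jointly_gaussian_def by blast

lemma EX: "integrable M X" "integral\<^sup>L M X = 0"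
  using gauss_law_mean[OF Xm DX] by auto
lemma EY: "integrable M Y" "integral\<^sup>L M Y = 0"
  using gauss_law_mean[OF Ym DY] by auto
lemma EX2: "integrable M (\<lambda>x. (X x)^2)" "integral\<^sup>L M (\<lambda>x. (X x)^2) = 1"
  using gauss_law_zero[OF Xm DX] by auto
lemma EY2: "integrable M (\<lambda>x. (Y x)^2)" "integral\<^sup>L M (\<lambda>x. (Y x)^2) = 1"
  using gauss_law_zero[OF Ym DY] by auto

lemma EXY: "integrable M (\<lambda>x. X x * Y x)"
proof (rule Bochner_Integration.integrable_bound[OF Bochner_Integration.integrable_add[OF EX2(1) EY2(1)]])
  show "(\<lambda>x. X x * Y x) \<in> borel_measurable M" by measurable
  show "AE x in M. norm (X x * Y x) \<le> norm ((X x)^2 + (Y x)^2)"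
  proof (rule AE_I2)
    fix x
    have "2 * \<bar>X x * Y x\<bar> \<le> (X x)^2 + (Y x)^2"
      using sum_squares_bound[of "\<bar>X x\<bar>" "\<bar>Y x\<bar>"] by (simp add: abs_mult power2_eq_square)
    then show "norm (X x * Y x) \<le> norm ((X x)^2 + (Y x)^2)" by simp
  qed
qed

lemma char_lin:
  "integral\<^sup>L M (\<lambda>x. exp (\<i> * complex_of_real (a * X x + b * Y x)))
     = complex_of_real (exp (- (a^2 + 2*a*b*c + b^2) / 2))"
proof -
  let ?U = "\<lambda>x. a * X x + b * Y x"
  have g: "gaussian_rv M ?U" using J unfolding jointly_gaussian_def by blast
  have E0: "integral\<^sup>L M ?U = 0" using EX EY by simp
  have sq: "\<And>x. (?U x)^2 = a^2 * (X x)^2 + (2*a*b) * (X x * Y x) + b^2 * (Y x)^2"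
    by (simp add: power2_eq_square algebra_simps)
  have "integral\<^sup>L M (\<lambda>x. (?U x)^2) = a^2 + 2*a*b*c + b^2"
    unfolding sq using EX2 EY2 EXY C by simp
  then show ?thesis using gauss_rv_char[OF g E0] by simp
qed

lemma EW: "integrable M (\<lambda>x. Y x - c * X x)" "integral\<^sup>L M (\<lambda>x. Y x - c * X x) = 0"
  using EX EY by auto

lemma EW2: "integrable M (\<lambda>x. (Y x - c * X x)^2)" "integral\<^sup>L M (\<lambda>x. (Y x - c * X x)^2) = 1 - c^2"
proof -
  have sq: "\<And>x. (Y x - c * X x)^2 = (Y x)^2 + (-2*c) * (X x * Y x) + c^2 * (X x)^2"
    by (simp add: power2_eq_square algebra_simps)
  show "integrable M (\<lambda>x. (Y x - c * X x)^2)" unfolding sq using EX2 EY2 EXY by simp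
  show "integral\<^sup>L M (\<lambda>x. (Y x - c * X x)^2) = 1 - c^2" unfolding sq using EX2 EY2 EXY C
    by (simp add: power2_eq_square)
qed

lemma s_nonneg: "0 \<le> 1 - c^2"
proof -
  have "0 \<le> integral\<^sup>L M (\<lambda>x. (Y x - c * X x)^2)" by (rule Bochner_Integration.integral_nonneg) simp
  then show ?thesis using EW2 by simp
qed

lemma charW:
  "integral\<^sup>L M (\<lambda>x. exp (\<i> * complex_of_real (t * X x + b * (Y x - c * X x))))
     = complex_of_real (exp (- (t^2 + b^2 * (1 - c^2)) / 2))"
proof -
  have e: "\<And>x. t * X x + b * (Y x - c * X x) = (t - b * c) * X x + b * Y x"
    by (simp add: algebra_simps)
  have q: "(t - b * c)^2 + 2 * (t - b * c) * b * c + b^2 = t^2 + b^2 * (1 - c^2)"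
    by (simp add: power2_eq_square algebra_simps)
  show ?thesis unfolding e using char_lin[of "t - b * c" b] q by simp
qed

lemma iexp_mult: "exp (\<i> * complex_of_real u) * exp (\<i> * complex_of_real w) = exp (\<i> * complex_of_real (u + w))"
  by (simp add: exp_add[symmetric] algebra_simps)

lemma K: "integral\<^sup>L M (\<lambda>x. (Y x - c * X x) *\<^sub>R exp (\<i> * complex_of_real (t * X x))) = 0"
proof -
  define z where "z = integral\<^sup>L M (\<lambda>x. (Y x - c * X x) *\<^sub>R exp (\<i> * complex_of_real (t * X x)))"
  define s where "s = 1 - c^2"
  have s0: "0 \<le> s" using s_nonneg s_def by simp
  have intz: "integrable M (\<lambda>x. (Y x - c * X x) *\<^sub>R exp (\<i> * complex_of_real (t * X x)))"
    by (rule Bochner_Integration.integrable_bound[OF EW(1)]) (auto simp: norm_mult)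
  have bound: "b * norm z \<le> b^2 * s" if b: "b > 0" for b
  proof -
    let ?e = "\<lambda>x. exp (\<i> * complex_of_real (t * X x))"
    let ?W = "\<lambda>x. Y x - c * X x"
    let ?g = "\<lambda>x. ?e x * (exp (\<i> * complex_of_real (b * ?W x)) - 1 - \<i> * complex_of_real (b * ?W x))"
    have i1: "integrable M (\<lambda>x. exp (\<i> * complex_of_real (t * X x + b * ?W x)))"
      by (rule integrable_const_bound[where B=1]) auto
    have i2: "integrable M ?e"
      by (rule integrable_const_bound[where B=1]) auto
    have i3: "integrable M (\<lambda>x. (\<i> * complex_of_real b) * (?W x *\<^sub>R ?e x))"
      using Bochner_Integration.integrable_mult_right[OF intz, of "\<i> * complex_of_real b"] by simp
    have geq: "\<And>x. ?g x = exp (\<i> * complex_of_real (t * X x + b * ?W x)) - ?e x - (\<i> * complex_of_real b) * (?W x *\<^sub>R ?e x)"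
    proof -
      fix x
      have m: "?e x * exp (\<i> * complex_of_real (b * ?W x)) = exp (\<i> * complex_of_real (t * X x + b * ?W x))"
        by (rule iexp_mult)
      have "?g x = ?e x * exp (\<i> * complex_of_real (b * ?W x)) - ?e x - (\<i> * complex_of_real b) * (?W x *\<^sub>R ?e x)"
        by (simp add: algebra_simps scaleR_conv_of_real)
      then show "?g x = exp (\<i> * complex_of_real (t * X x + b * ?W x)) - ?e x - (\<i> * complex_of_real b) * (?W x *\<^sub>R ?e x)"
        by (simp only: m)
    qed
    have ig: "integrable M ?g" unfolding geq using i1 i2 i3 by simp
    have Ig: "integral\<^sup>L M ?g = complex_of_real (exp (- (t^2 + b^2 * s) / 2)) - complex_of_real (exp (- (t^2) / 2)) - (\<i> * complex_of_real b) * z"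
    proof -
      have "integral\<^sup>L M ?g = integral\<^sup>L M (\<lambda>x. exp (\<i> * complex_of_real (t * X x + b * ?W x))) - integral\<^sup>L M ?e - integral\<^sup>L M (\<lambda>x. (\<i> * complex_of_real b) * (?W x *\<^sub>R ?e x))"
        unfolding geq using i1 i2 i3 by simp
      moreover have "integral\<^sup>L M ?e = complex_of_real (exp (- (t^2) / 2))"
        using charW[of t 0] by simp
      moreover have "integral\<^sup>L M (\<lambda>x. (\<i> * complex_of_real b) * (?W x *\<^sub>R ?e x)) = (\<i> * complex_of_real b) * z"
        unfolding z_def by (rule integral_mult_right_zero)
      ultimately show ?thesis using charW[of t b] s_def by simp
    qed
    have ng: "norm (integral\<^sup>L M ?g) \<le> b^2 * s / 2"
    proof -
      have "norm (integral\<^sup>L M ?g) \<le> integral\<^sup>L M (\<lambda>x. norm (?g x))" by (rule integral_norm_bound)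
      also have "\<dots> \<le> integral\<^sup>L M (\<lambda>x. b^2 / 2 * (?W x)^2)"
      proof (rule integral_mono)
        show "integrable M (\<lambda>x. norm (?g x))" using ig by simp
        show "integrable M (\<lambda>x. b^2 / 2 * (?W x)^2)" using EW2 by simp
        fix x
        have "cmod (exp (\<i> * complex_of_real (b * ?W x)) - 1 - \<i> * complex_of_real (b * ?W x)) \<le> (b * ?W x)^2 / 2"
          by (rule iexp_approx_2)
        also have "(b * ?W x)^2 / 2 = b^2 / 2 * (?W x)^2" by (simp add: power_mult_distrib)
        finally have "cmod (exp (\<i> * complex_of_real (b * ?W x)) - 1 - \<i> * complex_of_real (b * ?W x)) \<le> b^2 / 2 * (?W x)^2" .
        then show "norm (?g x) \<le> b^2 / 2 * (?W x)^2" by (simp add: norm_mult)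
      qed
      also have "\<dots> = b^2 * s / 2" using EW2 s_def by simp
      finally show ?thesis .
    qed
    have ne: "norm (complex_of_real (exp (- (t^2 + b^2 * s) / 2)) - complex_of_real (exp (- (t^2) / 2))) \<le> b^2 * s / 2"
    proof -
      have e1: "exp (- (t^2 + b^2 * s) / 2) = exp (- (t^2) / 2) * exp (- (b^2 * s / 2))"
        by (simp add: exp_add[symmetric] field_simps)
      have a: "1 - b^2 * s / 2 \<le> exp (- (b^2 * s / 2))" using exp_ge_add_one_self[of "- (b^2 * s / 2)"] by simp
      have b1: "exp (- (b^2 * s / 2)) \<le> 1" using s0 by simp
      have c1: "exp (- (t^2) / 2) \<le> 1" by simp
      have "norm (complex_of_real (exp (- (t^2 + b^2 * s) / 2)) - complex_of_real (exp (- (t^2) / 2)))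
          = exp (- (t^2) / 2) * (1 - exp (- (b^2 * s / 2)))"
      proof -
        have "norm (complex_of_real (exp (- (t^2 + b^2 * s) / 2)) - complex_of_real (exp (- (t^2) / 2)))
            = \<bar>exp (- (t^2 + b^2 * s) / 2) - exp (- (t^2) / 2)\<bar>"
          by (metis norm_of_real of_real_diff)
        also have "exp (- (t^2 + b^2 * s) / 2) - exp (- (t^2) / 2) = - (exp (- (t^2) / 2) * (1 - exp (- (b^2 * s / 2))))"
          unfolding e1 by (simp add: algebra_simps)
        also have "\<bar>- (exp (- (t^2) / 2) * (1 - exp (- (b^2 * s / 2))))\<bar> = exp (- (t^2) / 2) * (1 - exp (- (b^2 * s / 2)))"
          using b1 by (simp add: abs_mult)
        finally show ?thesis .
      qed
      also have "\<dots> \<le> 1 * (b^2 * s / 2)"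
        using a b1 c1 s0 by (intro mult_mono) auto
      finally show ?thesis by simp
    qed
    have "b * norm z = norm ((\<i> * complex_of_real b) * z)" using b by (simp add: norm_mult)
    also have "(\<i> * complex_of_real b) * z = (complex_of_real (exp (- (t^2 + b^2 * s) / 2)) - complex_of_real (exp (- (t^2) / 2))) - integral\<^sup>L M ?g"
      using Ig by simp
    also have "norm \<dots> \<le> b^2 * s / 2 + b^2 * s / 2"
      using norm_triangle_ineq4 ng ne by (smt (verit))
    finally show ?thesis by (simp add: mult.commute)
  qed
  have "norm z = 0"
  proof (rule ccontr)
    assume "norm z \<noteq> 0"
    then have nz: "norm z > 0" by simp
    define b where "b = norm z / (2 * (s + 1))"
    have b0: "b > 0" using nz s0 b_def by simp
    have "b * norm z \<le> b * (b * s)" using bound[OF b0] by (simp add: power2_eq_square algebra_simps)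
    then have "norm z \<le> b * s" using b0 by simp
    also have "b * s \<le> norm z / 2"
      unfolding b_def using nz s0 by (simp add: field_simps)
    finally show False using nz by simp
  qed
  then show ?thesis unfolding z_def by simp
qed

lemma prob_density:
  assumes f[measurable]: "f \<in> borel_measurable M" and nn: "\<And>x. 0 \<le> f x"
    and i: "integrable M f" and one: "integral\<^sup>L M f = 1"
  shows "prob_space (density M (\<lambda>x. ennreal (f x)))"
proof (rule prob_spaceI)
  have "emeasure (density M (\<lambda>x. ennreal (f x))) (space M) = (\<integral>\<^sup>+ x. ennreal (f x) * indicator (space M) x \<partial>M)"
    by (rule emeasure_density) auto
  also have "\<dots> = (\<integral>\<^sup>+ x. ennreal (f x) \<partial>M)"
    by (rule nn_integral_cong) auto
  also have "\<dots> = ennreal (integral\<^sup>L M f)"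
    by (rule nn_integral_eq_integral[OF i]) (simp add: nn)
  finally show "emeasure (density M (\<lambda>x. ennreal (f x))) (space (density M (\<lambda>x. ennreal (f x)))) = 1"
    using one by simp
qed

lemma L:
  assumes h[measurable]: "h \<in> borel_measurable borel"
    and ih: "integrable M (\<lambda>x. h (X x))"
    and iwh: "integrable M (\<lambda>x. (Y x - c * X x) * h (X x))"
  shows "integral\<^sup>L M (\<lambda>x. (Y x - c * X x) * h (X x)) = 0"
proof -
  let ?W = "\<lambda>x. Y x - c * X x"
  define p where "p x = max 0 (?W x)" for x
  define q where "q x = max 0 (- ?W x)" for x
  have pm[measurable]: "p \<in> borel_measurable M" unfolding p_def by measurable
  have qm[measurable]: "q \<in> borel_measurable M" unfolding q_def by measurable
  have ip: "integrable M p"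
    by (rule Bochner_Integration.integrable_bound[OF EW(1) pm]) (auto simp: p_def)
  have iq: "integrable M q"
    by (rule Bochner_Integration.integrable_bound[OF EW(1) qm]) (auto simp: q_def)
  have pq: "\<And>x. p x - q x = ?W x" unfolding p_def q_def by auto
  define m where "m = integral\<^sup>L M p"
  have m0: "0 \<le> m" unfolding m_def by (rule Bochner_Integration.integral_nonneg) (simp add: p_def)
  have mq: "integral\<^sup>L M q = m"
  proof -
    have "integral\<^sup>L M (\<lambda>x. p x - q x) = 0" unfolding pq using EW by simp
    then show ?thesis using ip iq unfolding m_def by simp
  qed
  define f1 where "f1 x = (p x + 1) / (m + 1)" for x
  define f2 where "f2 x = (q x + 1) / (m + 1)" for x
  have f1m[measurable]: "f1 \<in> borel_measurable M" unfolding f1_def by measurable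
  have f2m[measurable]: "f2 \<in> borel_measurable M" unfolding f2_def by measurable
  have f1nn: "\<And>x. 0 \<le> f1 x" unfolding f1_def p_def using m0 by simp
  have f2nn: "\<And>x. 0 \<le> f2 x" unfolding f2_def q_def using m0 by simp
  have if1: "integrable M f1" unfolding f1_def using ip by simp
  have if2: "integrable M f2" unfolding f2_def using iq by simp
  have I1: "integral\<^sup>L M f1 = 1" unfolding f1_def using ip m0 by (simp add: m_def prob_space.prob_space[OF P])
  have I2: "integral\<^sup>L M f2 = 1" unfolding f2_def using iq m0 mq by (simp add: prob_space.prob_space[OF P])
  have f12: "\<And>x. f1 x - f2 x = ?W x / (m + 1)"
  proof -
    fix x
    have "f1 x - f2 x = (p x - q x) / (m + 1)" unfolding f1_def f2_def by (simp add: diff_divide_distrib[symmetric])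
    then show "f1 x - f2 x = ?W x / (m + 1)" unfolding pq .
  qed
  define Q1 where "Q1 = distr (density M (\<lambda>x. ennreal (f1 x))) borel X"
  define Q2 where "Q2 = distr (density M (\<lambda>x. ennreal (f2 x))) borel X"
  have rd1: "real_distribution Q1"
  proof -
    interpret D: prob_space "density M (\<lambda>x. ennreal (f1 x))" by (rule prob_density[OF f1m f1nn if1 I1])
    have "prob_space Q1" unfolding Q1_def by (rule D.prob_space_distr) simp
    then show ?thesis by (simp add: real_distribution_def real_distribution_axioms_def Q1_def)
  qed
  have rd2: "real_distribution Q2"
  proof -
    interpret D: prob_space "density M (\<lambda>x. ennreal (f2 x))" by (rule prob_density[OF f2m f2nn if2 I2])
    have "prob_space Q2" unfolding Q2_def by (rule D.prob_space_distr) simp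
    then show ?thesis by (simp add: real_distribution_def real_distribution_axioms_def Q2_def)
  qed
  have intQ1: "integral\<^sup>L Q1 g = integral\<^sup>L M (\<lambda>x. f1 x *\<^sub>R g (X x))"
    if g[measurable]: "g \<in> borel_measurable borel" for g :: "real \<Rightarrow> 'b::{banach, second_countable_topology}"
  proof -
    have "integral\<^sup>L Q1 g = integral\<^sup>L (density M (\<lambda>x. ennreal (f1 x))) (\<lambda>x. g (X x))"
      unfolding Q1_def by (rule integral_distr) auto
    also have "\<dots> = integral\<^sup>L M (\<lambda>x. f1 x *\<^sub>R g (X x))"
      by (rule integral_density) (auto simp: f1nn)
    finally show ?thesis .
  qed
  have intQ2: "integral\<^sup>L Q2 g = integral\<^sup>L M (\<lambda>x. f2 x *\<^sub>R g (X x))"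
    if g[measurable]: "g \<in> borel_measurable borel" for g :: "real \<Rightarrow> 'b::{banach, second_countable_topology}"
  proof -
    have "integral\<^sup>L Q2 g = integral\<^sup>L (density M (\<lambda>x. ennreal (f2 x))) (\<lambda>x. g (X x))"
      unfolding Q2_def by (rule integral_distr) auto
    also have "\<dots> = integral\<^sup>L M (\<lambda>x. f2 x *\<^sub>R g (X x))"
      by (rule integral_density) (auto simp: f2nn)
    finally show ?thesis .
  qed
  have "char Q1 = char Q2"
  proof
    fix t
    let ?e = "\<lambda>x::real. exp (\<i> * complex_of_real (t * x))"
    have em: "?e \<in> borel_measurable borel" by measurable
    have ie1: "integrable M (\<lambda>x. f1 x *\<^sub>R ?e (X x))"
      by (rule Bochner_Integration.integrable_bound[OF if1]) auto
    have ie2: "integrable M (\<lambda>x. f2 x *\<^sub>R ?e (X x))"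
      by (rule Bochner_Integration.integrable_bound[OF if2]) auto
    have "char Q1 t - char Q2 t = integral\<^sup>L M (\<lambda>x. f1 x *\<^sub>R ?e (X x)) - integral\<^sup>L M (\<lambda>x. f2 x *\<^sub>R ?e (X x))"
      unfolding char_def using intQ1[OF em] intQ2[OF em] by simp
    also have "\<dots> = integral\<^sup>L M (\<lambda>x. (f1 x - f2 x) *\<^sub>R ?e (X x))"
      using ie1 ie2 by (simp add: scaleR_diff_left)
    also have "\<dots> = integral\<^sup>L M (\<lambda>x. (1 / (m + 1)) *\<^sub>R (?W x *\<^sub>R ?e (X x)))"
      unfolding f12 by (simp add: divide_inverse mult.commute)
    also have "\<dots> = (1 / (m + 1)) *\<^sub>R integral\<^sup>L M (\<lambda>x. ?W x *\<^sub>R ?e (X x))"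
      by (rule integral_scaleR_right)
    also have "\<dots> = 0" using K[of t] by simp
    finally show "char Q1 t = char Q2 t" by simp
  qed
  then have QQ: "Q1 = Q2" by (rule Levy_uniqueness[OF rd1 rd2])
  have ih1: "integrable M (\<lambda>x. f1 x * h (X x))"
  proof -
    have "integrable M (\<lambda>x. (1 / (m + 1)) * (p x * h (X x) + h (X x)))"
    proof -
      have "integrable M (\<lambda>x. p x * h (X x))"
        by (rule Bochner_Integration.integrable_bound[OF iwh]) (auto simp: p_def abs_mult intro!: AE_I2 mult_right_mono)
      then show ?thesis using ih by simp
    qed
    then show ?thesis unfolding f1_def by (simp add: field_simps)
  qed
  have ih2: "integrable M (\<lambda>x. f2 x * h (X x))"
  proof -
    have "integrable M (\<lambda>x. (1 / (m + 1)) * (q x * h (X x) + h (X x)))"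
    proof -
      have "integrable M (\<lambda>x. q x * h (X x))"
        by (rule Bochner_Integration.integrable_bound[OF iwh]) (auto simp: q_def abs_mult intro!: AE_I2 mult_right_mono)
      then show ?thesis using ih by simp
    qed
    then show ?thesis unfolding f2_def by (simp add: field_simps)
  qed
  have "integral\<^sup>L M (\<lambda>x. f1 x * h (X x)) = integral\<^sup>L M (\<lambda>x. f2 x * h (X x))"
    using intQ1[OF h] intQ2[OF h] QQ by simp
  then have "integral\<^sup>L M (\<lambda>x. (f1 x - f2 x) * h (X x)) = 0"
    using ih1 ih2 by (simp add: left_diff_distrib)
  then have "integral\<^sup>L M (\<lambda>x. (1 / (m + 1)) * (?W x * h (X x))) = 0"
    unfolding f12 by (simp add: field_simps)
  then show ?thesis using m0 by simp
qed

lemma sp_form: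
  assumes "A \<in> sigma_plus M X"
  obtains B where "B \<in> sets borel" "A = X -` B \<inter> space M" "measure M A > 0"
proof -
  have "A \<in> sets (vimage_algebra (space M) X borel)" "measure M A > 0"
    using assms unfolding sigma_plus_def by auto
  moreover have "sets (vimage_algebra (space M) X borel) = {X -` B \<inter> space M | B. B \<in> sets borel}"
    by (rule sets_vimage_algebra2) simp
  ultimately show ?thesis using that by auto
qed

lemma sp_sets: "A \<in> sigma_plus M X \<Longrightarrow> A \<in> sets M"
  by (erule sp_form) auto

lemma EXW: "integrable M (\<lambda>x. (Y x - c * X x) * X x)"
proof -
  have "(\<lambda>x. (Y x - c * X x) * X x) = (\<lambda>x. X x * Y x - c * (X x)^2)"
    by (simp add: power2_eq_square algebra_simps)
  then show ?thesis using EXY EX2 by simp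
qed

lemma cond_ids:
  assumes A: "A \<in> sigma_plus M X"
  shows "integral\<^sup>L M (\<lambda>x. indicator A x * Y x) = c * integral\<^sup>L M (\<lambda>x. indicator A x * X x)"
    and "integral\<^sup>L M (\<lambda>x. indicator A x * (X x * Y x)) = c * integral\<^sup>L M (\<lambda>x. indicator A x * (X x)^2)"
proof -
  obtain B where B[measurable]: "B \<in> sets borel" and AB: "A = X -` B \<inter> space M" using A by (rule sp_form)
  have ind: "\<And>x. x \<in> space M \<Longrightarrow> indicator A x = (indicator B (X x) :: real)"
    unfolding AB by (simp split: split_indicator)
  have Am[measurable]: "A \<in> sets M" unfolding AB by measurable
  let ?W = "\<lambda>x. Y x - c * X x"
  have "integral\<^sup>L M (\<lambda>x. ?W x * indicator B (X x)) = 0"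
  proof (rule L)
    show "indicator B \<in> borel_measurable (borel :: real measure)" by measurable
    show "integrable M (\<lambda>x. indicator B (X x) :: real)"
      by (rule integrable_const_bound[where B=1]) (auto split: split_indicator)
    show "integrable M (\<lambda>x. ?W x * indicator B (X x))"
      by (rule Bochner_Integration.integrable_bound[OF EW(1)]) (auto split: split_indicator)
  qed
  moreover have "integral\<^sup>L M (\<lambda>x. indicator A x * Y x - c * (indicator A x * X x)) = integral\<^sup>L M (\<lambda>x. ?W x * indicator B (X x))"
    by (rule Bochner_Integration.integral_cong) (auto simp: ind algebra_simps)
  ultimately have "integral\<^sup>L M (\<lambda>x. indicator A x * Y x - c * (indicator A x * X x)) = 0" by simp
  moreover have "integrable M (\<lambda>x. indicator A x * Y x)"
    using integrable_real_mult_indicator[OF Am EY(1)] by (simp add: mult.commute)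
  moreover have "integrable M (\<lambda>x. indicator A x * X x)"
    using integrable_real_mult_indicator[OF Am EX(1)] by (simp add: mult.commute)
  ultimately show "integral\<^sup>L M (\<lambda>x. indicator A x * Y x) = c * integral\<^sup>L M (\<lambda>x. indicator A x * X x)"
    by simp
  have "integral\<^sup>L M (\<lambda>x. ?W x * (X x * indicator B (X x))) = 0"
  proof (rule L)
    show "(\<lambda>x::real. x * indicator B x) \<in> borel_measurable borel" by measurable
    show "integrable M (\<lambda>x. X x * indicator B (X x))"
      by (rule Bochner_Integration.integrable_bound[OF EX(1)]) (auto split: split_indicator)
    show "integrable M (\<lambda>x. ?W x * (X x * indicator B (X x)))"
      by (rule Bochner_Integration.integrable_bound[OF EXW]) (auto split: split_indicator)
  qed
  moreover have "integral\<^sup>L M (\<lambda>x. indicator A x * (X x * Y x) - c * (indicator A x * (X x)^2)) = integral\<^sup>L M (\<lambda>x. ?W x * (X x * indicator B (X x)))"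
    by (rule Bochner_Integration.integral_cong) (auto simp: ind algebra_simps power2_eq_square)
  ultimately have "integral\<^sup>L M (\<lambda>x. indicator A x * (X x * Y x) - c * (indicator A x * (X x)^2)) = 0" by simp
  moreover have "integrable M (\<lambda>x. indicator A x * (X x * Y x))"
    using integrable_real_mult_indicator[OF Am EXY] by (simp add: mult.commute)
  moreover have "integrable M (\<lambda>x. indicator A x * (X x)^2)"
    using integrable_real_mult_indicator[OF Am EX2(1)] by (simp add: mult.commute)
  ultimately show "integral\<^sup>L M (\<lambda>x. indicator A x * (X x * Y x)) = c * integral\<^sup>L M (\<lambda>x. indicator A x * (X x)^2)"
    by simp
qed

lemma UM:
  assumes A: "A \<in> sets M" and pos: "measure M A > 0"
  shows "uniform_measure M A = density M (\<lambda>x. ennreal (indicator A x / measure M A))"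
  unfolding uniform_measure_def
proof (rule arg_cong[where f="density M"], rule ext)
  fix x
  have e: "emeasure M A = ennreal (measure M A)" by (rule emeasure_eq_measure)
  show "indicator A x / emeasure M A = ennreal (indicator A x / measure M A)"
  proof (cases "x \<in> A")
    case True
    then show ?thesis unfolding e using divide_ennreal[of 1 "measure M A"] pos by simp
  next
    case False
    then show ?thesis by simp
  qed
qed

lemma UMint:
  assumes A: "A \<in> sigma_plus M X" and f: "integrable M f"
  shows "integrable (uniform_measure M A) f"
    and "integral\<^sup>L (uniform_measure M A) f = integral\<^sup>L M (\<lambda>x. indicator A x * f x) / measure M A"
proof -
  have Am[measurable]: "A \<in> sets M" using A by (rule sp_sets)
  have pos: "measure M A > 0" using A unfolding sigma_plus_def by auto
  have fm[measurable]: "f \<in> borel_measurable M" using f by (rule borel_measurable_integrable)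
  have i: "integrable M (\<lambda>x. indicator A x * f x)"
    using integrable_real_mult_indicator[OF Am f] by (simp add: mult.commute)
  have dm: "(\<lambda>x. indicator A x / measure M A) \<in> borel_measurable M" by measurable
  have dnn: "AE x in M. 0 \<le> indicator A x / measure M A" using pos by (intro AE_I2) simp
  have eqf: "(\<lambda>x. indicator A x / measure M A * f x) = (\<lambda>x. (1 / measure M A) * (indicator A x * f x))"
    by (rule ext) simp
  show "integrable (uniform_measure M A) f"
    unfolding UM[OF Am pos] integrable_real_density[OF dm dnn fm] eqf
    using i by (rule Bochner_Integration.integrable_mult_right)
  show "integral\<^sup>L (uniform_measure M A) f = integral\<^sup>L M (\<lambda>x. indicator A x * f x) / measure M A"
    unfolding UM[OF Am pos] integral_real_density[OF dm dnn fm] eqf integral_mult_right_zero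
    by simp
qed

lemma UMprob: "A \<in> sigma_plus M X \<Longrightarrow> prob_space (uniform_measure M A)"
  using sp_sets[of A] unfolding sigma_plus_def
  by (intro prob_space_uniform_measure) (auto simp: emeasure_eq_measure)

lemma e_ids:
  assumes A: "A \<in> sigma_plus M X"
  shows "integral\<^sup>L (uniform_measure M A) Y = c * integral\<^sup>L (uniform_measure M A) X"
    and "integral\<^sup>L (uniform_measure M A) (\<lambda>x. X x * Y x) = c * integral\<^sup>L (uniform_measure M A) (\<lambda>x. (X x)^2)"
  using cond_ids[OF A] UMint(2)[OF A EX(1)] UMint(2)[OF A EY(1)] UMint(2)[OF A EXY] UMint(2)[OF A EX2(1)]
  by simp_all

lemma e_var:
  assumes A: "A \<in> sigma_plus M X"
  shows "(integral\<^sup>L (uniform_measure M A) X)^2 \<le> integral\<^sup>L (uniform_measure M A) (\<lambda>x. (X x)^2)"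
proof -
  let ?P = "uniform_measure M A"
  interpret PA: prob_space ?P by (rule UMprob[OF A])
  define a where "a = integral\<^sup>L ?P X"
  have i1: "integrable ?P X" by (rule UMint(1)[OF A EX(1)])
  have i2: "integrable ?P (\<lambda>x. (X x)^2)" by (rule UMint(1)[OF A EX2(1)])
  have "0 \<le> integral\<^sup>L ?P (\<lambda>x. (X x - a)^2)" by (rule Bochner_Integration.integral_nonneg) simp
  also have "(\<lambda>x. (X x - a)^2) = (\<lambda>x. (X x)^2 - 2 * a * X x + a^2)"
    by (simp add: power2_eq_square algebra_simps)
  also have "integral\<^sup>L ?P (\<lambda>x. (X x)^2 - 2 * a * X x + a^2) = integral\<^sup>L ?P (\<lambda>x. (X x)^2) - 2 * a * a + a^2"
    using i1 i2 PA.prob_space unfolding a_def by simp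
  finally show ?thesis unfolding a_def by (simp add: power2_eq_square)
qed

lemma Q_nonneg: "A \<in> sigma_plus M X \<Longrightarrow> B \<in> sigma_plus M X \<Longrightarrow> 0 \<le> Qf M X A B"
proof -
  assume A: "A \<in> sigma_plus M X" and B: "B \<in> sigma_plus M X"
  let ?a = "integral\<^sup>L (uniform_measure M A) X" and ?b = "integral\<^sup>L (uniform_measure M B) X"
  have "0 \<le> (?a - ?b)^2" by simp
  also have "\<dots> = ?a^2 - 2 * ?a * ?b + ?b^2" by (simp add: power2_eq_square algebra_simps)
  also have "\<dots> \<le> Qf M X A B" unfolding Qf_def using e_var[OF A] e_var[OF B] by simp
  finally show ?thesis .
qed

lemma space_sp: "space M \<in> sigma_plus M X"
proof -
  have "X -` UNIV \<inter> space M \<in> sets (vimage_algebra (space M) X borel)"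
    by (rule in_vimage_algebra) simp
  then show ?thesis unfolding sigma_plus_def by (simp add: prob_space)
qed

lemma Q_space: "Qf M X (space M) (space M) = 2"
proof -
  have "integral\<^sup>L (uniform_measure M (space M)) X = 0"
  proof -
    have "integral\<^sup>L M (\<lambda>x. indicator (space M) x * X x) = integral\<^sup>L M X"
      by (rule Bochner_Integration.integral_cong) auto
    then show ?thesis using UMint(2)[OF space_sp EX(1)] EX(2) by (simp add: prob_space)
  qed
  moreover have "integral\<^sup>L (uniform_measure M (space M)) (\<lambda>x. (X x)^2) = 1"
  proof -
    have "integral\<^sup>L M (\<lambda>x. indicator (space M) x * (X x)^2) = integral\<^sup>L M (\<lambda>x. (X x)^2)"
      by (rule Bochner_Integration.integral_cong) auto
    then show ?thesis using UMint(2)[OF space_sp EX2(1)] EX2(2) by (simp add: prob_space)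
  qed
  ultimately show ?thesis unfolding Qf_def by simp
qed

lemma main_int:
  assumes A: "A \<in> sigma_plus M X" and B: "B \<in> sigma_plus M X"
  shows "integrable (uniform_measure M A \<Otimes>\<^sub>M uniform_measure M B) (\<lambda>(w, w'). (X w - X w') * (Y w - Y w'))"
    and "integral\<^sup>L (uniform_measure M A \<Otimes>\<^sub>M uniform_measure M B) (\<lambda>(w, w'). (X w - X w') * (Y w - Y w')) = c * Qf M X A B"
proof -
  let ?PA = "uniform_measure M A" and ?PB = "uniform_measure M B"
  interpret PA: prob_space ?PA by (rule UMprob[OF A])
  interpret PB: prob_space ?PB by (rule UMprob[OF B])
  have PS: "pair_sigma_finite ?PA ?PB"
    unfolding pair_sigma_finite_def using UMprob[OF A] UMprob[OF B] by (auto intro: prob_space_imp_sigma_finite)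
  have Aone: "integrable ?PA (\<lambda>_. 1::real)" "integral\<^sup>L ?PA (\<lambda>_. 1::real) = 1"
    using PA.prob_space by auto
  have Bone: "integrable ?PB (\<lambda>_. 1::real)" "integral\<^sup>L ?PB (\<lambda>_. 1::real) = 1"
    using PB.prob_space by auto
  note AX = UMint(1)[OF A EX(1)] and AY = UMint(1)[OF A EY(1)] and AXY = UMint(1)[OF A EXY]
  note BX = UMint(1)[OF B EX(1)] and BY = UMint(1)[OF B EY(1)] and BXY = UMint(1)[OF B EXY]
  note T1 = prod_int[OF PS AXY Bone(1)]
  note T2 = prod_int[OF PS AX BY]
  note T3 = prod_int[OF PS AY BX]
  note T4 = prod_int[OF PS Aone(1) BXY]
  have Feq: "(\<lambda>(w, w'). (X w - X w') * (Y w - Y w')) =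
    (\<lambda>z. (X (fst z) * Y (fst z)) * 1 - X (fst z) * Y (snd z) - Y (fst z) * X (snd z) + 1 * (X (snd z) * Y (snd z)))"
    by (rule ext) (auto simp: algebra_simps split: prod.split)
  show "integrable (?PA \<Otimes>\<^sub>M ?PB) (\<lambda>(w, w'). (X w - X w') * (Y w - Y w'))"
    unfolding Feq using T1(1) T2(1) T3(1) T4(1) by simp
  have "integral\<^sup>L (?PA \<Otimes>\<^sub>M ?PB) (\<lambda>(w, w'). (X w - X w') * (Y w - Y w'))
     = integral\<^sup>L ?PA (\<lambda>x. X x * Y x) * 1 - integral\<^sup>L ?PA X * integral\<^sup>L ?PB Y
       - integral\<^sup>L ?PA Y * integral\<^sup>L ?PB X + 1 * integral\<^sup>L ?PB (\<lambda>x. X x * Y x)"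
    unfolding Feq using T1 T2 T3 T4 Aone(2) Bone(2)
    by (simp del: mult_1_right mult_1_left)
  also have "\<dots> = c * Qf M X A B"
    unfolding Qf_def e_ids[OF A] e_ids[OF B] by (simp add: algebra_simps)
  finally show "integral\<^sup>L (?PA \<Otimes>\<^sub>M ?PB) (\<lambda>(w, w'). (X w - X w') * (Y w - Y w')) = c * Qf M X A B" .
qed

lemma in_PXY:
  assumes c: "c \<ge> 0" and A: "A \<in> sigma_plus M X" and B: "B \<in> sigma_plus M X"
  shows "cond_measure M A \<Otimes>\<^sub>M cond_measure M B \<in> PXY M X Y"
  unfolding PXY_def cond_measure_def
proof (intro CollectI exI conjI)
  show "uniform_measure M A \<Otimes>\<^sub>M uniform_measure M B = uniform_measure M A \<Otimes>\<^sub>M uniform_measure M B" ..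
  show "prob_space (uniform_measure M A)" by (rule UMprob[OF A])
  show "prob_space (uniform_measure M B)" by (rule UMprob[OF B])
  show "sets (uniform_measure M A) = sets M" "sets (uniform_measure M B) = sets M" by simp_all
  show "integrable (uniform_measure M A \<Otimes>\<^sub>M uniform_measure M B) (\<lambda>(w, w'). (X w - X w') * (Y w - Y w'))"
    by (rule main_int(1)[OF A B])
  show "0 \<le> integral\<^sup>L (uniform_measure M A \<Otimes>\<^sub>M uniform_measure M B) (\<lambda>(w, w'). (X w - X w') * (Y w - Y w'))"
    unfolding main_int(2)[OF A B] using c Q_nonneg[OF A B] by simp
qed

lemma not_PXY:
  assumes c: "c < 0"
  shows "cond_measure M (space M) \<Otimes>\<^sub>M cond_measure M (space M) \<notin> PXY M X Y"
proof
  assume "cond_measure M (space M) \<Otimes>\<^sub>M cond_measure M (space M) \<in> PXY M X Y"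
  then obtain pi1 pi2 where eq: "uniform_measure M (space M) \<Otimes>\<^sub>M uniform_measure M (space M) = pi1 \<Otimes>\<^sub>M pi2"
    and ge: "0 \<le> integral\<^sup>L (pi1 \<Otimes>\<^sub>M pi2) (\<lambda>(w, w'). (X w - X w') * (Y w - Y w'))"
    unfolding PXY_def cond_measure_def by blast
  have "integral\<^sup>L (pi1 \<Otimes>\<^sub>M pi2) (\<lambda>(w, w'). (X w - X w') * (Y w - Y w')) = c * 2"
    unfolding eq[symmetric] main_int(2)[OF space_sp space_sp] Q_space ..
  then show False using ge c by simp
qed

end

theorem proposition4p1:
  fixes M :: "'a measure" and X Y :: "'a \<Rightarrow> real" and c :: real
  assumes "prob_space M"
    and "jointly_gaussian M X Y"
    and "distr M borel X = gaussian_law 0 1"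
    and "distr M borel Y = gaussian_law 0 1"
    and "c \<in> {-1..1}"
    and "integral\<^sup>L M (\<lambda>\<omega>. X \<omega> * Y \<omega>) = c"
  shows "(c \<ge> 0 \<longleftrightarrow>
           {cond_measure M A \<Otimes>\<^sub>M cond_measure M B | A B. A \<in> sigma_plus M X \<and> B \<in> sigma_plus M X}
             \<subseteq> PXY M X Y)
       \<and> (c \<ge> 0 \<longleftrightarrow>
           {cond_measure M A \<Otimes>\<^sub>M cond_measure M A | A. A \<in> sigma_plus M X} \<subseteq> PXY M X Y)"
proof -
  note H = assms(1-4) assms(6)
  have S: "space M \<in> sigma_plus M X" by (rule space_sp[OF H])
  show ?thesis
  proof (cases "c \<ge> 0")
    case True
    then show ?thesis using in_PXY[OF H True] by blast
  next
    case False
    then have "c < 0" by simp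
    note N = not_PXY[OF H this]
    have "cond_measure M (space M) \<Otimes>\<^sub>M cond_measure M (space M)
       \<in> {cond_measure M A \<Otimes>\<^sub>M cond_measure M B | A B. A \<in> sigma_plus M X \<and> B \<in> sigma_plus M X}"
      using S by blast
    moreover have "cond_measure M (space M) \<Otimes>\<^sub>M cond_measure M (space M)
       \<in> {cond_measure M A \<Otimes>\<^sub>M cond_measure M A | A. A \<in> sigma_plus M X}"
      using S by blast
    ultimately show ?thesis using N False by blast
  qed
qed

end
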